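(* Let $K$ be a field, let $A=\{{\bf a}_1,\ldots,{\bf a}_n\}\subset\mathbb{Z}^m$ be a vector configuration with $\mathbb{N}A$ pointed, and let $I_A\subset K[x_1,\ldots,x_n]$ be its toric ideal. Let $s\ge 1$ be an integer. Then: (i) There exist toric ideals $I_{A_1},\ldots,I_{A_s}\subset K[x_1,\ldots,x_n]$ with $I_{A_i}\neq I_A$ for every $1\le i\le s$ such that $I_A=I_{A_1}+\cdots+I_{A_s}$ if and only if there exist a set $C\subset \ker_{\mathbb{Z}}(A)$ such that $\{B({\bf u})\mid {\bf u}\in C\}$ is a minimal system of binomial generators of $I_A$, and sets $C_1,\ldots,C_s$ with $C=\bigcup_{i=1}^s C_i$ and $\mathrm{span}_{\mathbb{Q}}(C_i)\subsetneqq \ker_{\mathbb{Q}}(A)$ for every $1\le i\le s$. (ii) There exist toric ideals $I_{A_1},\ldots,I_{A_s}\subset K[x_1,\ldots,x_n]$ with $I_{A_i}\neq I_A$ for every $1\le i\le s$ such that $I_A=\mathrm{rad}(I_{A_1}+\cdots+I_{A_s})$ if and only if there exist a set $C\subset \ker_{\mathbb{Z}}(A)$ such that $\{B({\bf u})\mid {\bf u}\in C\}$ is a minimal system of binomial generators of $I_A$ up to radical, and sets $C_1,\ldots,C_s$ with $C=\bigcup_{i=1}^s C_i$ and $\mathrm{span}_{\mathbb{Q}}(C_i)\subsetneqq \ker_{\mathbb{Q}}(A)$ for every $1\le i\le s$.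
   Context: For a vector configuration $A=\{{\bf a}_1,\ldots,{\bf a}_n\}\subset\mathbb{Z}^m$, $\ker_{\mathbb{Q}}(A)=\{{\bf u}\in\mathbb{Q}^n\mid u_1{\bf a}_1+\cdots+u_n{\bf a}_n={\bf 0}\}$ and $\ker_{\mathbb{Z}}(A)=\ker_{\mathbb{Q}}(A)\cap\mathbb{Z}^n$; $\mathbb{N}A$ is pointed means $\ker_{\mathbb{Z}}(A)\cap\mathbb{N}^n=\{{\bf 0}\}$. The toric ideal $I_A$ is the kernel of the $K$-algebra map $K[x_1,\ldots,x_n]\to K[t_1^{\pm1},\ldots,t_m^{\pm1}]$, $x_i\mapsto {\bf t}^{{\bf a}_i}$; it is generated by the binomials $B({\bf u})={\bf x}^{{\bf u}^+}-{\bf x}^{{\bf u}^-}$, ${\bf u}\in\ker_{\mathbb{Z}}(A)$, where ${\bf u}^+,{\bf u}^-\in\mathbb{N}^n$ are the positive and negative parts of ${\bf u}={\bf u}^+-{\bf u}^-$. A "toric ideal in $K[x_1,\ldots,x_n]$" means $I_{A'}$ for some configuration $A'$ of $n$ vectors in some $\mathbb{Z}^{m'}$ with $\mathbb{N}A'$ pointed. For a set $C\subset\mathbb{Z}^n$, $\mathrm{span}_{\mathbb{Q}}(C)$ is the $\mathbb{Q}$-span of $C$. A set $S$ of binomials is a minimal system of binomial generators of $I_A$ up to radical if $\mathrm{rad}(S)=I_A$ and no proper subset $S'\subsetneqq S$ satisfies $\mathrm{rad}(S')=I_A$; a minimal system of binomial generators of $I_A$ is a set of binomials generating $I_A$ none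 of whose proper subsets generates $I_A$. *)

theory Defs
  imports Complex_Main "HOL-Library.Poly_Mapping"
begin

text \<open>Polynomial ring K[x_v : v in 'v] with a finite variable type 'v (so n = CARD('v)):
  polynomials are finitely supported maps from monomials ('v =>0 nat) to coefficients.\<close>
type_synonym ('v, 'k) mpoly = "('v \<Rightarrow>\<^sub>0 nat) \<Rightarrow>\<^sub>0 'k"

definition ideal_gen :: "'a::comm_ring_1 set \<Rightarrow> 'a set" where
  "ideal_gen S = {(\<Sum>a\<in>t. r a * a) | t r. finite t \<and> t \<subseteq> S}"

definition radical :: "'a::comm_ring_1 set \<Rightarrow> 'a set" where
  "radical I = {f. \<exists>k::nat. f ^ k \<in> I}"

text \<open>A vector configuration A = {a_v} in Z^m: a_v = (A v 0, ..., A v (m-1)), zero beyond m.\<close>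
definition config_in :: "nat \<Rightarrow> ('v \<Rightarrow> nat \<Rightarrow> int) \<Rightarrow> bool" where
  "config_in m A \<longleftrightarrow> (\<forall>v i. m \<le> i \<longrightarrow> A v i = 0)"

definition kerZ :: "('v::finite \<Rightarrow> nat \<Rightarrow> int) \<Rightarrow> ('v \<Rightarrow> int) set" where
  "kerZ A = {u. \<forall>i. (\<Sum>v\<in>UNIV. u v * A v i) = 0}"

definition kerQ :: "('v::finite \<Rightarrow> nat \<Rightarrow> int) \<Rightarrow> ('v \<Rightarrow> rat) set" where
  "kerQ A = {u. \<forall>i. (\<Sum>v\<in>UNIV. u v * of_int (A v i)) = 0}"

definition pointed :: "('v::finite \<Rightarrow> nat \<Rightarrow> int) \<Rightarrow> bool" where
  "pointed A \<longleftrightarrow> (\<forall>u\<in>kerZ A. (\<forall>v. 0 \<le> u v) \<longrightarrow> (\<forall>v. u v = 0))"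

definition spanQ :: "('v \<Rightarrow> int) set \<Rightarrow> ('v \<Rightarrow> rat) set" where
  "spanQ C = {(\<lambda>v. \<Sum>u\<in>t. r u * rat_of_int (u v)) | t r. finite t \<and> t \<subseteq> C}"

definition Adeg :: "('v::finite \<Rightarrow> nat \<Rightarrow> int) \<Rightarrow> ('v \<Rightarrow>\<^sub>0 nat) \<Rightarrow> nat \<Rightarrow> int" where
  "Adeg A \<alpha> = (\<lambda>i. \<Sum>v\<in>UNIV. int (Poly_Mapping.lookup \<alpha> v) * A v i)"

text \<open>Toric ideal: kernel of x_v |-> t^(a_v). The image of p has coefficient at t^e equal to
  the sum of the coefficients of the monomials of A-degree e.\<close>
definition toric_ideal :: "('v::finite \<Rightarrow> nat \<Rightarrow> int) \<Rightarrow> ('v, 'k::field) mpoly set" where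
  "toric_ideal A = {p. \<forall>e. (\<Sum>\<alpha>\<in>{\<alpha>\<in>Poly_Mapping.keys p. Adeg A \<alpha> = e}. Poly_Mapping.lookup p \<alpha>) = 0}"

definition pos_part :: "('v::finite \<Rightarrow> int) \<Rightarrow> ('v \<Rightarrow>\<^sub>0 nat)" where
  "pos_part u = Abs_poly_mapping (\<lambda>v. nat (u v))"

definition neg_part :: "('v::finite \<Rightarrow> int) \<Rightarrow> ('v \<Rightarrow>\<^sub>0 nat)" where
  "neg_part u = Abs_poly_mapping (\<lambda>v. nat (- u v))"

definition binom :: "('v::finite \<Rightarrow> int) \<Rightarrow> ('v, 'k::field) mpoly" where
  "binom u = Poly_Mapping.single (pos_part u) 1 - Poly_Mapping.single (neg_part u) 1"

definition is_toric_ideal :: "('v::finite, 'k::field) mpoly set \<Rightarrow> bool" where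
  "is_toric_ideal I \<longleftrightarrow> (\<exists>m' (A'::'v \<Rightarrow> nat \<Rightarrow> int). config_in m' A' \<and> pointed A' \<and> I = toric_ideal A')"

definition min_binom_gens :: "('v::finite \<Rightarrow> nat \<Rightarrow> int) \<Rightarrow> ('v, 'k::field) mpoly set \<Rightarrow> bool" where
  "min_binom_gens A S \<longleftrightarrow> ideal_gen S = toric_ideal A \<and> (\<forall>S'. S' \<subset> S \<longrightarrow> ideal_gen S' \<noteq> toric_ideal A)"

definition min_binom_gens_rad :: "('v::finite \<Rightarrow> nat \<Rightarrow> int) \<Rightarrow> ('v, 'k::field) mpoly set \<Rightarrow> bool" where
  "min_binom_gens_rad A S \<longleftrightarrow> radical (ideal_gen S) = toric_ideal A \<and>
     (\<forall>S'. S' \<subset> S \<longrightarrow> radical (ideal_gen S') \<noteq> toric_ideal A)"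

end

theory Submission
  imports Defs "HOL-Library.Function_Algebras" "HOL-Library.Ramsey"
begin

lemma sum_fun_app: "(sum f S) x = sum (\<lambda>a. f a x) S"
  by (induct S rule: infinite_finite_induct) auto

lemma common_denom:
  fixes c :: "'a \<Rightarrow> rat"
  assumes "finite S"
  shows "\<exists>D::int. D > 0 \<and> (\<forall>v\<in>S. \<exists>k::int. of_int D * c v = of_int k)"
  using assms
proof (induct S rule: finite_induct)
  case empty
  then show ?case by (intro exI[of _ 1]) auto
next
  case (insert x F)
  then obtain D where D: "D > 0" "\<forall>v\<in>F. \<exists>k::int. of_int D * c v = of_int k" by auto
  obtain a b where ab: "quotient_of (c x) = (a, b)" by (cases "quotient_of (c x)")
  have b: "b > 0" using quotient_of_denom_pos[OF ab] .
  have cx: "c x = of_int a / of_int b" using quotient_of_div[OF ab] .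
  have "\<exists>k::int. of_int (D * b) * c v = of_int k" if "v \<in> insert x F" for v
  proof (cases "v = x")
    case True
    then show ?thesis using b by (intro exI[of _ "D * a"]) (simp add: cx)
  next
    case False
    then have "v \<in> F" using that by simp
    then obtain k where "of_int D * c v = of_int k" using D by auto
    then show ?thesis by (intro exI[of _ "b * k"]) (simp add: algebra_simps)
  qed
  moreover have "D * b > 0" using D b by simp
  ultimately show ?case by blast
qed

lemma vsQ: "vector_space (\<lambda>(c::rat) (f::'v\<Rightarrow>rat) v. c * f v)"
  by unfold_locales (auto simp: algebra_simps fun_eq_iff)

lemma vsR: "vector_space ((*) :: rat \<Rightarrow> rat \<Rightarrow> rat)"
  by unfold_locales (auto simp: algebra_simps)

lemma sep:
  fixes C :: "('v::finite \<Rightarrow> int) set" and A :: "'v \<Rightarrow> nat \<Rightarrow> int"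
  assumes "spanQ C \<subset> kerQ A"
  shows "\<exists>\<psi>::'v\<Rightarrow>int. (\<forall>u\<in>C. (\<Sum>v\<in>UNIV. u v * \<psi> v) = 0) \<and>
            (\<exists>u\<in>kerZ A. (\<Sum>v\<in>UNIV. u v * \<psi> v) \<noteq> 0)"
proof -
  let ?s = "\<lambda>(c::rat) (f::'v\<Rightarrow>rat) v. c * f v"
  interpret vs: vector_space ?s by (rule vsQ)
  interpret vp: vector_space_pair ?s "(*) :: rat \<Rightarrow> rat \<Rightarrow> rat"
    by (intro vector_space_pair.intro vsQ vsR)
  obtain w where w: "w \<in> kerQ A" "w \<notin> spanQ C" using assms by auto
  define h where "h = (\<lambda>(u::'v\<Rightarrow>int) v. rat_of_int (u v))"
  define X where "X = h ` C"
  have spanX: "vs.span X \<subseteq> spanQ C"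
  proof
    fix x assume "x \<in> vs.span X"
    then obtain t r where t: "finite t" "t \<subseteq> X" "x = (\<Sum>a\<in>t. ?s (r a) a)"
      unfolding vs.span_explicit by blast
    obtain t0 where t0: "t0 \<subseteq> C" "finite t0" "t = h ` t0"
      using finite_subset_image[OF t(1) t(2)[unfolded X_def]] by blast
    have inj: "inj_on h t0" unfolding h_def inj_on_def by (auto simp: fun_eq_iff)
    have "x = (\<Sum>u\<in>t0. ?s (r (h u)) (h u))"
      using t(3) t0(3) sum.reindex[OF inj] by (simp add: comp_def)
    then have "x = (\<lambda>v. \<Sum>u\<in>t0. (r (h u)) * rat_of_int (u v))"
      by (simp add: fun_eq_iff sum_fun_app h_def)
    then show "x \<in> spanQ C" unfolding spanQ_def using t0
      by (intro CollectI exI[of _ t0] exI[of _ "\<lambda>u. r (h u)"]) auto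
  qed
  obtain B where B: "B \<subseteq> vs.span X" "vs.independent B" "vs.span X \<subseteq> vs.span B"
    using vs.maximal_independent_subset by blast
  have "vs.span B \<subseteq> vs.span X" using B(1) by (simp add: vs.span_minimal)
  then have wB: "w \<notin> vs.span B" using spanX w(2) by blast
  have ind: "vs.independent (insert w B)" using vs.independent_insertI[OF wB B(2)] .
  obtain g where g: "Vector_Spaces.linear ?s (*) g" "\<forall>x\<in>insert w B. g x = (if x = w then 1 else 0)"
    using vp.linear_independent_extend[OF ind, of "\<lambda>x. if x = w then 1 else 0"] by blast
  have gB: "\<forall>x\<in>B. g x = 0" using g(2) wB vs.span_base by fastforce
  have g0: "g x = 0" if "x \<in> vs.span B" for x
    using vp.linear_eq_0_on_span[OF g(1) _ that] gB by blast
  have gX: "g (h u) = 0" if "u \<in> C" for u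
    using g0 B(3) vs.span_base[of "h u" X] that unfolding X_def by blast
  define e where "e = (\<lambda>v::'v. \<lambda>w. if w = v then (1::rat) else 0)"
  have gcoord: "g x = (\<Sum>v\<in>UNIV. x v * g (e v))" for x
  proof -
    have "x = (\<Sum>v\<in>UNIV. ?s (x v) (e v))"
      by (simp add: fun_eq_iff sum_fun_app e_def if_distrib cong: if_cong)
    then have "g x = g (\<Sum>v\<in>UNIV. ?s (x v) (e v))" by (rule arg_cong)
    also have "\<dots> = (\<Sum>v\<in>UNIV. x v * g (e v))"
      by (simp add: vp.linear_sum[OF g(1)] vp.linear_scale[OF g(1)])
    finally show ?thesis .
  qed
  obtain D where D: "D > 0" "\<forall>v\<in>UNIV. \<exists>k::int. of_int D * g (e v) = of_int k"
    using common_denom[of UNIV "\<lambda>v. g (e v)"] by auto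
  obtain \<psi> where \<psi>: "\<And>v. of_int D * g (e v) = of_int (\<psi> v)"
  proof -
    have "\<forall>v. \<exists>k::int. of_int D * g (e v) = of_int k" using D(2) by auto
    then have "\<exists>\<psi>. \<forall>v. of_int D * g (e v) = of_int (\<psi> v)" by (rule choice)
    then show ?thesis using that by blast
  qed
  have key: "rat_of_int (\<Sum>v\<in>UNIV. u v * \<psi> v) = of_int D * g (h u)" for u
  proof -
    have "rat_of_int (\<Sum>v\<in>UNIV. u v * \<psi> v) = (\<Sum>v\<in>UNIV. of_int (u v) * of_int (\<psi> v))"
      by simp
    also have "\<dots> = (\<Sum>v\<in>UNIV. of_int D * (of_int (u v) * g (e v)))"
    proof (rule sum.cong[OF refl])
      fix v :: 'v
      have "rat_of_int (u v) * rat_of_int (\<psi> v) = rat_of_int (u v) * (rat_of_int D * g (e v))"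
        by (simp only: \<psi>)
      also have "\<dots> = rat_of_int D * (rat_of_int (u v) * g (e v))"
        by (rule mult.left_commute)
      finally show "rat_of_int (u v) * rat_of_int (\<psi> v) = rat_of_int D * (rat_of_int (u v) * g (e v))" .
    qed
    also have "\<dots> = of_int D * g (h u)"
    proof -
      have "g (h u) = (\<Sum>v\<in>UNIV. h u v * g (e v))" by (rule gcoord)
      then show ?thesis by (simp add: sum_distrib_left h_def)
    qed
    finally show ?thesis .
  qed
  obtain E where E: "E > 0" "\<forall>v\<in>UNIV. \<exists>k::int. of_int E * w v = of_int k"
    using common_denom[of UNIV w] by auto
  obtain u where u: "\<And>v. of_int E * w v = rat_of_int (u v)"
  proof -
    have "\<forall>v. \<exists>k::int. of_int E * w v = of_int k" using E(2) by auto
    then have "\<exists>u. \<forall>v. of_int E * w v = rat_of_int (u v)" by (rule choice)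
    then show ?thesis using that by blast
  qed
  have hu: "h u = ?s (of_int E) w" unfolding h_def
  proof (rule ext)
    fix v show "rat_of_int (u v) = of_int E * w v" by (rule u[symmetric])
  qed
  have uK: "u \<in> kerZ A"
  proof -
    have "rat_of_int (\<Sum>v\<in>UNIV. u v * A v i) = 0" for i
    proof -
      have "rat_of_int (\<Sum>v\<in>UNIV. u v * A v i) = (\<Sum>v\<in>UNIV. rat_of_int (u v) * of_int (A v i))"
        by (simp only: of_int_sum of_int_mult)
      also have "\<dots> = (\<Sum>v\<in>UNIV. of_int E * (w v * of_int (A v i)))"
      proof (rule sum.cong[OF refl])
        fix v show "rat_of_int (u v) * of_int (A v i) = of_int E * (w v * of_int (A v i))"
          by (subst u[symmetric]) (rule mult.assoc)
      qed
      also have "\<dots> = of_int E * (\<Sum>v\<in>UNIV. w v * of_int (A v i))"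
        by (rule sum_distrib_left[symmetric])
      also have "\<dots> = 0" using w(1) unfolding kerQ_def by simp
      finally show ?thesis .
    qed
    then have "(\<Sum>v\<in>UNIV. u v * A v i) = 0" for i by (metis of_int_eq_0_iff)
    then show ?thesis unfolding kerZ_def by simp
  qed
  have gw: "g w = 1" using g(2) by simp
  have "rat_of_int (\<Sum>v\<in>UNIV. u v * \<psi> v) \<noteq> 0"
    using key[of u] hu vp.linear_scale[OF g(1)] gw D(1) E(1) by simp
  then have "(\<Sum>v\<in>UNIV. u v * \<psi> v) \<noteq> 0" by (metis of_int_0)
  moreover have "\<forall>u\<in>C. (\<Sum>v\<in>UNIV. u v * \<psi> v) = 0"
  proof
    fix u' assume "u' \<in> C"
    then have "rat_of_int (\<Sum>v\<in>UNIV. u' v * \<psi> v) = 0" using key gX by simp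
    then show "(\<Sum>v\<in>UNIV. u' v * \<psi> v) = 0" by (metis of_int_eq_0_iff)
  qed
  ultimately show ?thesis using uK by blast
qed


lemma ig_base: "x \<in> S \<Longrightarrow> x \<in> ideal_gen S"
  unfolding ideal_gen_def by (intro CollectI exI[of _ "{x}"] exI[of _ "\<lambda>_. 1"]) auto

lemma ig_zero: "0 \<in> ideal_gen S"
  unfolding ideal_gen_def by (intro CollectI exI[of _ "{}"]) auto

lemma ig_add:
  assumes "x \<in> ideal_gen S" "y \<in> ideal_gen S"
  shows "x + y \<in> ideal_gen S"
proof -
  obtain t1 r1 where 1: "x = (\<Sum>a\<in>t1. r1 a * a)" "finite t1" "t1 \<subseteq> S"
    using assms(1) unfolding ideal_gen_def by blast
  obtain t2 r2 where 2: "y = (\<Sum>a\<in>t2. r2 a * a)" "finite t2" "t2 \<subseteq> S"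
    using assms(2) unfolding ideal_gen_def by blast
  define r where "r a = (if a \<in> t1 then r1 a else 0) + (if a \<in> t2 then r2 a else 0)" for a
  have fin: "finite (t1 \<union> t2)" using 1 2 by simp
  have "(\<Sum>a\<in>t1 \<union> t2. r a * a) = (\<Sum>a\<in>t1 \<union> t2. (if a \<in> t1 then r1 a * a else 0))
        + (\<Sum>a\<in>t1 \<union> t2. (if a \<in> t2 then r2 a * a else 0))"
    unfolding sum.distrib[symmetric] by (rule sum.cong) (auto simp: r_def distrib_right)
  also have "\<dots> = x + y"
    using sum.inter_restrict[OF fin, of "\<lambda>a. r1 a * a" t1] sum.inter_restrict[OF fin, of "\<lambda>a. r2 a * a" t2] 1 2
    by (simp add: Int_absorb1 Int_commute)
  finally show ?thesis unfolding ideal_gen_def using fin 1 2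
    by (intro CollectI exI[of _ "t1 \<union> t2"] exI[of _ r]) auto
qed

lemma ig_mult:
  assumes "x \<in> ideal_gen S"
  shows "c * x \<in> ideal_gen S"
proof -
  obtain t r where 1: "x = (\<Sum>a\<in>t. r a * a)" "finite t" "t \<subseteq> S"
    using assms unfolding ideal_gen_def by blast
  have "c * x = (\<Sum>a\<in>t. (c * r a) * a)" using 1 by (simp add: sum_distrib_left mult.assoc)
  then show ?thesis unfolding ideal_gen_def using 1
    by (intro CollectI exI[of _ t] exI[of _ "\<lambda>a. c * r a"]) auto
qed

lemma ig_neg: "x \<in> ideal_gen S \<Longrightarrow> - x \<in> ideal_gen S"
  using ig_mult[of x S "-1"] by simp

lemma ig_diff: "x \<in> ideal_gen S \<Longrightarrow> y \<in> ideal_gen S \<Longrightarrow> x - y \<in> ideal_gen S"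
  using ig_add[OF _ ig_neg] by (metis diff_conv_add_uminus)

lemma ig_sum: "(\<And>a. a \<in> T \<Longrightarrow> f a \<in> ideal_gen S) \<Longrightarrow> sum f T \<in> ideal_gen S"
  by (induct T rule: infinite_finite_induct) (auto intro: ig_zero ig_add)

lemma ig_least:
  assumes "T \<subseteq> R" "0 \<in> R" "\<And>x y. x \<in> R \<Longrightarrow> y \<in> R \<Longrightarrow> x + y \<in> R"
    "\<And>c x. x \<in> R \<Longrightarrow> c * x \<in> R"
  shows "ideal_gen T \<subseteq> R"
proof
  fix x assume "x \<in> ideal_gen T"
  then obtain t r where 1: "x = (\<Sum>a\<in>t. r a * a)" "finite t" "t \<subseteq> T"
    unfolding ideal_gen_def by blast
  have "(\<Sum>a\<in>t'. r a * a) \<in> R" if "t' \<subseteq> t" for t'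
    using finite_subset[OF that 1(2)] that
    by (induct t' rule: finite_induct) (use 1 assms in auto)
  then show "x \<in> R" using 1 by auto
qed

lemma ig_subset: "T \<subseteq> ideal_gen S \<Longrightarrow> ideal_gen T \<subseteq> ideal_gen S"
  by (rule ig_least) (auto intro: ig_zero ig_add ig_mult)

lemma ig_mono: "S \<subseteq> T \<Longrightarrow> ideal_gen S \<subseteq> ideal_gen T"
  by (rule ig_subset) (auto intro: ig_base)

lemma ig_finite:
  assumes "x \<in> ideal_gen S"
  shows "\<exists>t. finite t \<and> t \<subseteq> S \<and> x \<in> ideal_gen t"
proof -
  obtain t r where 1: "x = (\<Sum>a\<in>t. r a * a)" "finite t" "t \<subseteq> S"
    using assms unfolding ideal_gen_def by blast
  then have "x \<in> ideal_gen t" unfolding ideal_gen_def by blast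
  then show ?thesis using 1 by blast
qed

lemma rad_sup: "J \<subseteq> radical J"
  unfolding radical_def by (auto intro: exI[of _ 1])

lemma rad_mono: "J \<subseteq> K \<Longrightarrow> radical J \<subseteq> radical K"
  unfolding radical_def by auto

lemma rad_rad: "radical (radical J) \<subseteq> radical J"
  unfolding radical_def by (auto simp: power_mult[symmetric])

lemma rad_add:
  fixes x y :: "'a::comm_ring_1"
  assumes "x ^ a \<in> ideal_gen S" "y ^ b \<in> ideal_gen S"
  shows "(x + y) ^ (a + b) \<in> ideal_gen S"
proof -
  have "(x + y) ^ (a + b) = (\<Sum>k\<le>a + b. of_nat ((a + b) choose k) * x ^ k * y ^ (a + b - k))"
    by (rule binomial_ring)
  also have "\<dots> \<in> ideal_gen S"
  proof (rule ig_sum)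
    fix k assume "k \<in> {..a + b}"
    show "of_nat ((a + b) choose k) * x ^ k * y ^ (a + b - k) \<in> ideal_gen S"
    proof (cases "a \<le> k")
      case True
      then have "x ^ k = x ^ (k - a) * x ^ a" by (simp add: power_add[symmetric])
      then have "of_nat ((a + b) choose k) * x ^ k * y ^ (a + b - k) =
          (of_nat ((a + b) choose k) * x ^ (k - a) * y ^ (a + b - k)) * x ^ a"
        by (simp add: ac_simps)
      then show ?thesis using ig_mult[OF assms(1)] by simp
    next
      case False
      then have "y ^ (a + b - k) = y ^ (a + b - k - b) * y ^ b" by (simp add: power_add[symmetric])
      then have "of_nat ((a + b) choose k) * x ^ k * y ^ (a + b - k) =
          (of_nat ((a + b) choose k) * x ^ k * y ^ (a + b - k - b)) * y ^ b"
        by (simp add: ac_simps)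
      then show ?thesis using ig_mult[OF assms(2)] by simp
    qed
  qed
  finally show ?thesis .
qed

lemma rad_ideal: "ideal_gen (radical (ideal_gen S)) \<subseteq> radical (ideal_gen S)"
proof (rule ig_least)
  show "0 \<in> radical (ideal_gen S)" unfolding radical_def
    by (intro CollectI exI[of _ 1]) (simp add: ig_zero)
  show "x + y \<in> radical (ideal_gen S)" if "x \<in> radical (ideal_gen S)" "y \<in> radical (ideal_gen S)" for x y
    using that rad_add unfolding radical_def by blast
  show "c * x \<in> radical (ideal_gen S)" if h: "x \<in> radical (ideal_gen S)" for c x
  proof -
    obtain k where "x ^ k \<in> ideal_gen S" using h unfolding radical_def by blast
    then have "(c * x) ^ k \<in> ideal_gen S" using ig_mult[of "x ^ k" S "c ^ k"] by (simp add: power_mult_distrib)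
    then show ?thesis unfolding radical_def by blast
  qed
qed simp

lemma min_subset:
  assumes "finite G" "P G"
  shows "\<exists>S\<subseteq>G. P S \<and> (\<forall>S'. S' \<subset> S \<longrightarrow> \<not> P S')"
proof -
  define Q where "Q n = (\<exists>S\<subseteq>G. P S \<and> card S = n)" for n
  have "Q (card G)" using assms unfolding Q_def by blast
  then have "Q (LEAST n. Q n)" by (rule LeastI)
  then obtain S where S: "S \<subseteq> G" "P S" "card S = (LEAST n. Q n)" unfolding Q_def by blast
  have "\<not> P S'" if "S' \<subset> S" for S'
  proof
    assume "P S'"
    then have "Q (card S')" using that S(1) unfolding Q_def by blast
    then have "(LEAST n. Q n) \<le> card S'" by (rule Least_le)
    moreover have "card S' < card S"
      using psubset_card_mono[OF finite_subset[OF S(1) assms(1)] that] .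
    ultimately show False using S(3) by simp
  qed
  then show ?thesis using S by blast
qed


lemma Adeg_eq_iff:
  "Adeg A \<alpha> = Adeg A \<beta> \<longleftrightarrow>
     (\<lambda>v. int (Poly_Mapping.lookup \<alpha> v) - int (Poly_Mapping.lookup \<beta> v)) \<in> kerZ A"
proof -
  have d: "Adeg A \<alpha> i - Adeg A \<beta> i =
      (\<Sum>v\<in>UNIV. (int (Poly_Mapping.lookup \<alpha> v) - int (Poly_Mapping.lookup \<beta> v)) * A v i)" for i
    unfolding Adeg_def by (simp add: sum_subtractf left_diff_distrib)
  have "Adeg A \<alpha> = Adeg A \<beta> \<longleftrightarrow> (\<forall>i. Adeg A \<alpha> i - Adeg A \<beta> i = 0)"
    by (simp add: fun_eq_iff)
  also have "\<dots> \<longleftrightarrow> (\<lambda>v. int (Poly_Mapping.lookup \<alpha> v) - int (Poly_Mapping.lookup \<beta> v)) \<in> kerZ A"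
    unfolding kerZ_def d by simp
  finally show ?thesis .
qed

lemma toric_iff:
  assumes "finite F" "Poly_Mapping.keys p \<subseteq> F"
  shows "p \<in> toric_ideal A \<longleftrightarrow>
    (\<forall>e. (\<Sum>\<alpha>\<in>{\<alpha>\<in>F. Adeg A \<alpha> = e}. Poly_Mapping.lookup p \<alpha>) = 0)"
proof -
  have "(\<Sum>\<alpha>\<in>{\<alpha>\<in>F. Adeg A \<alpha> = e}. Poly_Mapping.lookup p \<alpha>) =
        (\<Sum>\<alpha>\<in>{\<alpha>\<in>Poly_Mapping.keys p. Adeg A \<alpha> = e}. Poly_Mapping.lookup p \<alpha>)" for e
    by (rule sum.mono_neutral_right) (use assms in \<open>auto simp: in_keys_iff\<close>)
  then show ?thesis by (simp add: toric_ideal_def)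
qed

lemma toric_mono:
  assumes "kerZ A' \<subseteq> kerZ A"
  shows "toric_ideal A' \<subseteq> (toric_ideal A :: ('v::finite, 'k::field) mpoly set)"
proof
  fix p :: "('v, 'k) mpoly" assume p: "p \<in> toric_ideal A'"
  have H: "Adeg A \<alpha> = Adeg A \<beta>" if "Adeg A' \<alpha> = Adeg A' \<beta>" for \<alpha> \<beta>
    using that assms Adeg_eq_iff by blast
  show "p \<in> toric_ideal A" unfolding toric_ideal_def
  proof (intro CollectI allI)
    fix e
    let ?X = "{\<alpha>\<in>Poly_Mapping.keys p. Adeg A \<alpha> = e}"
    have fin: "finite ?X" by simp
    have "(\<Sum>\<alpha>\<in>?X. Poly_Mapping.lookup p \<alpha>) =
       (\<Sum>y\<in>Adeg A' ` ?X. \<Sum>\<alpha>\<in>{x. x \<in> ?X \<and> Adeg A' x = y}. Poly_Mapping.lookup p \<alpha>)"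
      by (rule sum.image_gen[OF fin])
    also have "\<dots> = 0"
    proof (rule sum.neutral, rule ballI)
      fix y assume "y \<in> Adeg A' ` ?X"
      then obtain \<alpha>0 where a0: "\<alpha>0 \<in> ?X" "y = Adeg A' \<alpha>0" by blast
      have "x \<in> ?X \<and> Adeg A' x = y \<longleftrightarrow> x \<in> Poly_Mapping.keys p \<and> Adeg A' x = y" for x
      proof
        assume "x \<in> ?X \<and> Adeg A' x = y" then show "x \<in> Poly_Mapping.keys p \<and> Adeg A' x = y" by simp
      next
        assume x: "x \<in> Poly_Mapping.keys p \<and> Adeg A' x = y"
        then have "Adeg A' x = Adeg A' \<alpha>0" using a0(2) by simp
        then have "Adeg A x = Adeg A \<alpha>0" by (rule H)
        moreover have "Adeg A \<alpha>0 = e" using a0(1) by simp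
        ultimately show "x \<in> ?X \<and> Adeg A' x = y" using x by simp
      qed
      then have "{x. x \<in> ?X \<and> Adeg A' x = y} = {x\<in>Poly_Mapping.keys p. Adeg A' x = y}"
        by blast
      then show "(\<Sum>\<alpha>\<in>{x. x \<in> ?X \<and> Adeg A' x = y}. Poly_Mapping.lookup p \<alpha>) = 0"
        using p unfolding toric_ideal_def by simp
    qed
    finally show "(\<Sum>\<alpha>\<in>?X. Poly_Mapping.lookup p \<alpha>) = 0" .
  qed
qed

lemma lookup_pos: "Poly_Mapping.lookup (pos_part u) v = nat (u v)"
  unfolding pos_part_def by simp

lemma lookup_neg: "Poly_Mapping.lookup (neg_part u) v = nat (- u v)"
  unfolding neg_part_def by simp

lemma pos_neg_diff:
  "(\<lambda>v. int (Poly_Mapping.lookup (pos_part u) v) - int (Poly_Mapping.lookup (neg_part u) v)) = u"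
  by (simp add: fun_eq_iff lookup_pos lookup_neg)

lemma zero_kerZ: "(\<lambda>v. 0) \<in> kerZ A"
  unfolding kerZ_def by simp

lemma binom_toric:
  "(binom u :: ('v::finite, 'k::field) mpoly) \<in> toric_ideal A \<longleftrightarrow> u \<in> kerZ A"
proof -
  define P where "P = pos_part u"
  define N where "N = neg_part u"
  have diff: "(\<lambda>v. int (Poly_Mapping.lookup P v) - int (Poly_Mapping.lookup N v)) = u"
    unfolding P_def N_def by (rule pos_neg_diff)
  show ?thesis
  proof (cases "P = N")
    case True
    then have "(binom u :: ('v, 'k) mpoly) = 0" unfolding binom_def P_def N_def by simp
    moreover have "u \<in> kerZ A"
    proof -
      have "u = (\<lambda>v. 0)" using diff[symmetric] True by simp
      then show ?thesis using zero_kerZ[of A] by simp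
    qed
    moreover have "(0 :: ('v, 'k) mpoly) \<in> toric_ideal A" unfolding toric_ideal_def by simp
    ultimately show ?thesis by simp
  next
    case False
    have keys: "Poly_Mapping.keys (binom u :: ('v, 'k) mpoly) \<subseteq> {P, N}"
      unfolding binom_def P_def[symmetric] N_def[symmetric]
      by (auto simp: in_keys_iff lookup_minus lookup_single when_def split: if_splits)
    have lk: "Poly_Mapping.lookup (binom u :: ('v, 'k) mpoly) P = 1"
       "Poly_Mapping.lookup (binom u :: ('v, 'k) mpoly) N = -1"
      using False unfolding binom_def P_def[symmetric] N_def[symmetric]
      by (simp_all add: lookup_minus lookup_single when_def)
    have S: "(\<Sum>\<alpha>\<in>{\<alpha>\<in>{P, N}. Adeg A \<alpha> = e}. Poly_Mapping.lookup (binom u :: ('v, 'k) mpoly) \<alpha>) =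
        (if Adeg A P = e then 1 else 0) + (if Adeg A N = e then -1 else 0)" for e
    proof -
      have "(\<Sum>\<alpha>\<in>{\<alpha>\<in>{P, N}. Adeg A \<alpha> = e}. Poly_Mapping.lookup (binom u :: ('v, 'k) mpoly) \<alpha>) =
        (\<Sum>\<alpha>\<in>{P, N}. if Adeg A \<alpha> = e then Poly_Mapping.lookup (binom u :: ('v, 'k) mpoly) \<alpha> else 0)"
        by (rule sum.inter_filter) simp
      also have "\<dots> = (if Adeg A P = e then 1 else 0) + (if Adeg A N = e then -1 else 0)"
        using False by (simp add: lk)
      finally show ?thesis .
    qed
    have "(binom u :: ('v, 'k) mpoly) \<in> toric_ideal A \<longleftrightarrow>
        (\<forall>e. (if Adeg A P = e then 1 else 0) + (if Adeg A N = e then -1 else 0) = (0::'k))"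
      using toric_iff[OF _ keys] S by simp
    also have "\<dots> \<longleftrightarrow> Adeg A P = Adeg A N"
    proof
      assume "\<forall>e. (if Adeg A P = e then 1 else 0) + (if Adeg A N = e then -1 else 0) = (0::'k)"
      then have "(if Adeg A P = Adeg A P then 1 else 0) + (if Adeg A N = Adeg A P then -1 else 0) = (0::'k)"
        by (rule allE)
      then show "Adeg A P = Adeg A N" by (cases "Adeg A N = Adeg A P") auto
    qed auto
    also have "\<dots> \<longleftrightarrow> u \<in> kerZ A" using Adeg_eq_iff[of A P N] diff by simp
    finally show ?thesis .
  qed
qed


lemma toric_diff:
  assumes "p1 \<in> toric_ideal A" "p2 \<in> toric_ideal A"
  shows "(p1 - p2 :: ('v::finite, 'k::field) mpoly) \<in> toric_ideal A"
proof -
  let ?F = "Poly_Mapping.keys p1 \<union> Poly_Mapping.keys p2"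
  have fin: "finite ?F" by simp
  have k: "Poly_Mapping.keys (p1 - p2) \<subseteq> ?F"
    by (auto simp: in_keys_iff lookup_minus)
  have s1: "\<forall>e. (\<Sum>\<alpha>\<in>{\<alpha>\<in>?F. Adeg A \<alpha> = e}. Poly_Mapping.lookup p1 \<alpha>) = 0"
    using toric_iff[OF fin, of p1 A] assms(1) by auto
  have s2: "\<forall>e. (\<Sum>\<alpha>\<in>{\<alpha>\<in>?F. Adeg A \<alpha> = e}. Poly_Mapping.lookup p2 \<alpha>) = 0"
    using toric_iff[OF fin, of p2 A] assms(2) by auto
  have "\<forall>e. (\<Sum>\<alpha>\<in>{\<alpha>\<in>?F. Adeg A \<alpha> = e}. Poly_Mapping.lookup (p1 - p2) \<alpha>) = 0"
    using s1 s2 by (simp add: lookup_minus sum_subtractf)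
  then show ?thesis using toric_iff[OF fin k] by simp
qed

lemma single_diff_toric:
  assumes "Adeg A \<alpha> = Adeg A \<beta>"
  shows "(Poly_Mapping.single \<alpha> c - Poly_Mapping.single \<beta> c :: ('v::finite, 'k::field) mpoly) \<in> toric_ideal A"
proof (cases "\<alpha> = \<beta>")
  case True
  then show ?thesis unfolding toric_ideal_def by simp
next
  case False
  have k: "Poly_Mapping.keys (Poly_Mapping.single \<alpha> c - Poly_Mapping.single \<beta> c :: ('v, 'k) mpoly) \<subseteq> {\<alpha>, \<beta>}"
    by (auto simp: in_keys_iff lookup_minus lookup_single when_def split: if_splits)
  have "(\<Sum>x\<in>{x\<in>{\<alpha>, \<beta>}. Adeg A x = e}. Poly_Mapping.lookup (Poly_Mapping.single \<alpha> c - Poly_Mapping.single \<beta> c :: ('v, 'k) mpoly) x) = 0" for e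
  proof -
    have "(\<Sum>x\<in>{x\<in>{\<alpha>, \<beta>}. Adeg A x = e}. Poly_Mapping.lookup (Poly_Mapping.single \<alpha> c - Poly_Mapping.single \<beta> c :: ('v, 'k) mpoly) x)
      = (\<Sum>x\<in>{\<alpha>, \<beta>}. if Adeg A x = e then Poly_Mapping.lookup (Poly_Mapping.single \<alpha> c - Poly_Mapping.single \<beta> c :: ('v, 'k) mpoly) x else 0)"
      by (rule sum.inter_filter) simp
    also have "\<dots> = (if Adeg A \<alpha> = e then c else 0) + (if Adeg A \<beta> = e then - c else 0)"
      using False by (simp add: lookup_minus lookup_single when_def)
    also have "\<dots> = 0" using assms by simp
    finally show ?thesis .
  qed
  then show ?thesis using toric_iff[OF _ k] by simp
qed

lemma toric_gen_diff:
  fixes A :: "'v::finite \<Rightarrow> nat \<Rightarrow> int"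
  shows "(p::('v, 'k::field) mpoly) \<in> toric_ideal A \<Longrightarrow> p \<in> ideal_gen
     {Poly_Mapping.single \<alpha> 1 - Poly_Mapping.single \<beta> 1 | \<alpha> \<beta>. Adeg A \<alpha> = Adeg A \<beta>}"
proof (induct "card (Poly_Mapping.keys p)" arbitrary: p rule: less_induct)
  case less
  let ?D = "{Poly_Mapping.single \<alpha> 1 - Poly_Mapping.single \<beta> 1 :: ('v, 'k) mpoly | \<alpha> \<beta>. Adeg A \<alpha> = Adeg A \<beta>}"
  show ?case
  proof (cases "p = 0")
    case True
    then show ?thesis by (simp add: ig_zero)
  next
    case False
    then obtain \<alpha> where a: "\<alpha> \<in> Poly_Mapping.keys p"
      by (metis ex_in_conv keys_eq_empty)
    define c where "c = Poly_Mapping.lookup p \<alpha>"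
    have c0: "c \<noteq> 0" using a unfolding c_def by (simp add: in_keys_iff)
    have sum0: "(\<Sum>\<beta>\<in>{\<beta>\<in>Poly_Mapping.keys p. Adeg A \<beta> = Adeg A \<alpha>}. Poly_Mapping.lookup p \<beta>) = 0"
      using less.prems unfolding toric_ideal_def by blast
    obtain \<beta> where b: "\<beta> \<in> Poly_Mapping.keys p" "\<beta> \<noteq> \<alpha>" "Adeg A \<beta> = Adeg A \<alpha>"
    proof (rule ccontr)
      assume "\<not> thesis"
      then have nb: "\<And>\<beta>. \<beta> \<in> Poly_Mapping.keys p \<Longrightarrow> Adeg A \<beta> = Adeg A \<alpha> \<Longrightarrow> \<beta> = \<alpha>"
        using that by blast
      have "{\<beta>\<in>Poly_Mapping.keys p. Adeg A \<beta> = Adeg A \<alpha>} = {\<alpha>}"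
        using a nb by blast
      then show False using sum0 c0 unfolding c_def by simp
    qed
    define q where "q = Poly_Mapping.single \<alpha> c - Poly_Mapping.single \<beta> c"
    have qD: "q = Poly_Mapping.single 0 c * (Poly_Mapping.single \<alpha> 1 - Poly_Mapping.single \<beta> 1)"
      by (simp add: q_def right_diff_distrib mult_single)
    have qin: "q \<in> ideal_gen ?D"
      unfolding qD using b(3)
      by (intro ig_mult ig_base CollectI exI[of _ \<alpha>] exI[of _ \<beta>]) simp
    have qt: "q \<in> toric_ideal A" unfolding q_def using b(3) by (intro single_diff_toric) simp
    define p' where "p' = p - q"
    have pt: "p' \<in> toric_ideal A" unfolding p'_def using less.prems qt by (rule toric_diff)
    have keys': "Poly_Mapping.keys p' \<subseteq> Poly_Mapping.keys p - {\<alpha>}"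
    proof
      fix x assume x: "x \<in> Poly_Mapping.keys p'"
      have lx: "Poly_Mapping.lookup p' x = Poly_Mapping.lookup p x - (c when \<alpha> = x) + (c when \<beta> = x)"
        unfolding p'_def q_def by (simp add: lookup_minus lookup_single)
      show "x \<in> Poly_Mapping.keys p - {\<alpha>}"
      proof (cases "x = \<alpha>")
        case True
        then have "Poly_Mapping.lookup p' x = 0" using lx b(2) unfolding c_def by (simp add: when_def)
        then show ?thesis using x by (simp add: in_keys_iff)
      next
        case False
        show ?thesis
        proof (cases "x = \<beta>")
          case True then show ?thesis using b False by simp
        next
          case F2: False
          then have "Poly_Mapping.lookup p' x = Poly_Mapping.lookup p x" using lx False by (simp add: when_def)
          then show ?thesis using x False by (simp add: in_keys_iff)
        qed
      qed
    qed
    have "card (Poly_Mapping.keys p') < card (Poly_Mapping.keys p)"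
    proof -
      have "card (Poly_Mapping.keys p') \<le> card (Poly_Mapping.keys p - {\<alpha>})"
        using keys' by (intro card_mono) auto
      also have "\<dots> < card (Poly_Mapping.keys p)" using a by (intro card_Diff1_less) auto
      finally show ?thesis .
    qed
    then have "p' \<in> ideal_gen ?D" using less.hyps pt by blast
    then have "p' + q \<in> ideal_gen ?D" using qin by (rule ig_add)
    then show ?thesis unfolding p'_def by simp
  qed
qed

lemma dickson:
  fixes f :: "nat \<Rightarrow> 'w::finite \<Rightarrow> nat"
  shows "\<exists>i j. i < j \<and> (\<forall>w. f i w \<le> f j w)"
proof (rule ccontr)
  assume H: "\<not> (\<exists>i j. i < j \<and> (\<forall>w. f i w \<le> f j w))"
  then have bad: "\<exists>w. f j w < f i w" if "i < j" for i j using that by (meson not_le)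
  obtain h :: "'w \<Rightarrow> nat" and n where hn: "h ` UNIV = {i. i < n}" "inj h"
    using finite_imp_inj_to_nat_seg[of "UNIV :: 'w set"] by auto
  define W where "W X = (SOME w. f (Max X) w < f (Min X) w)" for X :: "nat set"
  define col where "col X = h (W X)" for X
  have W2: "f (max x y) (W {x, y}) < f (min x y) (W {x, y})" if "x \<noteq> y" for x y
  proof -
    have "\<exists>w. f (Max {x, y}) w < f (Min {x, y}) w" using bad[of "min x y" "max x y"] that
      by (simp add: min_def max_def)
    then have "f (Max {x, y}) (W {x, y}) < f (Min {x, y}) (W {x, y})"
      unfolding W_def by (rule someI_ex)
    then show ?thesis by (simp add: min_def max_def)
  qed
  have part: "\<forall>x\<in>(UNIV::nat set). \<forall>y\<in>UNIV. x \<noteq> y \<longrightarrow> col {x, y} < n"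
    unfolding col_def using hn(1) by auto
  obtain Y t where Y: "Y \<subseteq> UNIV" "infinite Y" "t < n" "\<forall>x\<in>Y. \<forall>y\<in>Y. x \<noteq> y \<longrightarrow> col {x, y} = t"
    using Ramsey2[OF infinite_UNIV_nat part] by blast
  obtain y0 where y0: "y0 \<in> Y" using Y(2) by (metis ex_in_conv finite.emptyI)
  obtain w0 where w0: "h w0 = t" using hn(1) Y(3) by (metis (mono_tags, lifting) imageE mem_Collect_eq)
  have dec: "f y w0 < f x w0" if "x \<in> Y" "y \<in> Y" "x < y" for x y
  proof -
    have "h (W {x, y}) = h w0" using Y(4) that w0 unfolding col_def by auto
    then have "W {x, y} = w0" using hn(2) by (simp add: inj_eq)
    then show ?thesis using W2[of x y] that by (simp add: min_def max_def)
  qed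
  define Y' where "Y' = {y\<in>Y. y0 < y}"
  have "Y \<subseteq> {..y0} \<union> Y'" unfolding Y'_def by auto
  then have infY': "infinite Y'" using Y(2) finite_subset by auto
  have inj: "inj_on (\<lambda>y. f y w0) Y'"
  proof (rule inj_onI)
    fix x y assume "x \<in> Y'" "y \<in> Y'" "f x w0 = f y w0"
    then show "x = y" using dec[of x y] dec[of y x] unfolding Y'_def
      by (metis (no_types, lifting) linorder_neqE_nat mem_Collect_eq nat_neq_iff)
  qed
  have "(\<lambda>y. f y w0) ` Y' \<subseteq> {..<f y0 w0}"
    using dec y0 unfolding Y'_def by auto
  then have "finite ((\<lambda>y. f y w0) ` Y')" using finite_subset by blast
  then have "finite Y'" using inj finite_imageD by blast
  then show False using infY' by simp
qed


type_synonym 'v mpair = "('v \<Rightarrow>\<^sub>0 nat) \<times> ('v \<Rightarrow>\<^sub>0 nat)"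

definition pkey :: "'v mpair \<Rightarrow> ('v + 'v \<Rightarrow> nat)" where
  "pkey p = (\<lambda>x. case x of Inl v \<Rightarrow> Poly_Mapping.lookup (fst p) v | Inr v \<Rightarrow> Poly_Mapping.lookup (snd p) v)"

definition le_pair :: "'v mpair \<Rightarrow> 'v mpair \<Rightarrow> bool" where
  "le_pair p q \<longleftrightarrow> (\<forall>x. pkey p x \<le> pkey q x)"

definition psize :: "'v::finite mpair \<Rightarrow> nat" where
  "psize p = (\<Sum>x\<in>UNIV. pkey p x)"

definition pdiff :: "'v mpair \<Rightarrow> 'v \<Rightarrow> int" where
  "pdiff p = (\<lambda>v. int (Poly_Mapping.lookup (fst p) v) - int (Poly_Mapping.lookup (snd p) v))"

definition Pset :: "('v::finite \<Rightarrow> nat \<Rightarrow> int) \<Rightarrow> 'v mpair set" where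
  "Pset A = {p. Adeg A (fst p) = Adeg A (snd p) \<and> fst p \<noteq> snd p}"

definition Mset :: "('v::finite \<Rightarrow> nat \<Rightarrow> int) \<Rightarrow> 'v mpair set" where
  "Mset A = {p \<in> Pset A. \<forall>q\<in>Pset A. le_pair q p \<longrightarrow> q = p}"

lemma pkey_inj: "pkey p = pkey q \<Longrightarrow> p = q"
proof -
  assume h: "pkey p = pkey q"
  have "Poly_Mapping.lookup (fst p) v = Poly_Mapping.lookup (fst q) v" for v
    using fun_cong[OF h, of "Inl v"] unfolding pkey_def by simp
  then have 1: "fst p = fst q" by (rule poly_mapping_eqI)
  have "Poly_Mapping.lookup (snd p) v = Poly_Mapping.lookup (snd q) v" for v
    using fun_cong[OF h, of "Inr v"] unfolding pkey_def by simp
  then have 2: "snd p = snd q" by (rule poly_mapping_eqI)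
  show "p = q" using 1 2 by (rule prod_eqI)
qed

lemma finite_M: "finite (Mset (A :: 'v::finite \<Rightarrow> nat \<Rightarrow> int))"
proof (rule ccontr)
  assume "infinite (Mset A)"
  then obtain f :: "nat \<Rightarrow> 'v mpair" where f: "inj f" "range f \<subseteq> Mset A"
    using infinite_countable_subset by blast
  obtain i j where ij: "i < j" "\<forall>w. pkey (f i) w \<le> pkey (f j) w"
    using dickson[of "\<lambda>n. pkey (f n)"] by blast
  have "f j \<in> Mset A" "f i \<in> Mset A" using f(2) by auto
  then have "f i = f j" using ij(2) unfolding Mset_def le_pair_def by blast
  then show False using f(1) ij(1) by (simp add: inj_eq)
qed

lemma le_pair_trans: "le_pair p q \<Longrightarrow> le_pair q r \<Longrightarrow> le_pair p r"
  unfolding le_pair_def using order_trans by blast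

lemma le_pair_size:
  assumes "le_pair q p" "q \<noteq> p"
  shows "psize q < psize (p :: 'v::finite mpair)"
proof -
  have "pkey q \<noteq> pkey p" using assms(2) pkey_inj by blast
  then obtain x where "pkey q x \<noteq> pkey p x" by (meson ext)
  then have "pkey q x < pkey p x" using assms(1) unfolding le_pair_def by (meson le_neq_implies_less)
  then show ?thesis unfolding psize_def
    using assms(1) unfolding le_pair_def by (intro sum_strict_mono_ex1) auto
qed

lemma exists_min:
  assumes "p \<in> Pset A"
  shows "\<exists>m\<in>Mset A. le_pair m (p :: 'v::finite mpair)"
proof -
  define Q where "Q n = (\<exists>q\<in>Pset A. le_pair q p \<and> psize q = n)" for n
  have "Q (psize p)" using assms unfolding Q_def le_pair_def by blast
  then have "Q (LEAST n. Q n)" by (rule LeastI)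
  then obtain q0 where q0: "q0 \<in> Pset A" "le_pair q0 p" "psize q0 = (LEAST n. Q n)"
    unfolding Q_def by blast
  have "q0 \<in> Mset A" unfolding Mset_def
  proof (intro CollectI conjI ballI impI)
    show "q0 \<in> Pset A" by (rule q0(1))
    fix q assume q: "q \<in> Pset A" "le_pair q q0"
    show "q = q0"
    proof (rule ccontr)
      assume "q \<noteq> q0"
      then have "psize q < psize q0" using q(2) le_pair_size by blast
      moreover have "Q (psize q)" unfolding Q_def using q le_pair_trans[OF q(2) q0(2)] by blast
      then have "(LEAST n. Q n) \<le> psize q" by (rule Least_le)
      ultimately show False using q0(3) by simp
    qed
  qed
  then show ?thesis using q0(2) by blast
qed

lemma pdiff_ker: "p \<in> Pset A \<Longrightarrow> pdiff p \<in> kerZ A"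
  unfolding Pset_def pdiff_def using Adeg_eq_iff by blast

lemma kerZ_diff:
  assumes "u \<in> kerZ A" "w \<in> kerZ A"
  shows "(\<lambda>v. u v - w v) \<in> kerZ A"
  using assms unfolding kerZ_def by (simp add: left_diff_distrib sum_subtractf)

lemma M_binom:
  assumes m: "m \<in> Mset A"
  shows "(binom (pdiff m) :: ('v::finite, 'k::field) mpoly) =
     Poly_Mapping.single (fst m) 1 - Poly_Mapping.single (snd m) 1"
proof -
  define \<alpha> where "\<alpha> = fst m"
  define \<beta> where "\<beta> = snd m"
  have mP: "m \<in> Pset A" using m unfolding Mset_def by blast
  have zero: "Poly_Mapping.lookup \<alpha> v = 0 \<or> Poly_Mapping.lookup \<beta> v = 0" for v
  proof (rule ccontr)
    assume nz: "\<not> (Poly_Mapping.lookup \<alpha> v = 0 \<or> Poly_Mapping.lookup \<beta> v = 0)"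
    define \<gamma> where "\<gamma> = Abs_poly_mapping (\<lambda>v. min (Poly_Mapping.lookup \<alpha> v) (Poly_Mapping.lookup \<beta> v))"
    have lg: "Poly_Mapping.lookup \<gamma> w = min (Poly_Mapping.lookup \<alpha> w) (Poly_Mapping.lookup \<beta> w)" for w
      unfolding \<gamma>_def by simp
    define m' where "m' = (\<alpha> - \<gamma>, \<beta> - \<gamma>)"
    have pd: "pdiff m' = pdiff m"
    proof
      fix w
      show "pdiff m' w = pdiff m w"
        unfolding pdiff_def m'_def \<alpha>_def[symmetric] \<beta>_def[symmetric]
        by (cases "Poly_Mapping.lookup \<alpha> w \<le> Poly_Mapping.lookup \<beta> w")
           (simp_all add: lookup_minus lg min_def of_nat_diff)
    qed
    have m'P: "m' \<in> Pset A"
    proof -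
      have "Adeg A (fst m') = Adeg A (snd m')"
        using Adeg_eq_iff[of A "fst m'" "snd m'"] pdiff_ker[OF mP] pd unfolding pdiff_def by simp
      moreover have "fst m' \<noteq> snd m'"
      proof
        assume "fst m' = snd m'"
        then have "pdiff m' = (\<lambda>v. 0)" unfolding pdiff_def by simp
        then have "pdiff m = (\<lambda>v. 0)" using pd by simp
        then have "Poly_Mapping.lookup \<alpha> w = Poly_Mapping.lookup \<beta> w" for w
          using fun_cong[of "pdiff m" "\<lambda>v. 0" w] unfolding pdiff_def \<alpha>_def \<beta>_def by simp
        then have "\<alpha> = \<beta>" by (rule poly_mapping_eqI)
        then show False using mP unfolding Pset_def \<alpha>_def \<beta>_def by simp
      qed
      ultimately show ?thesis unfolding Pset_def by simp
    qed
    have "le_pair m' m"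
      unfolding le_pair_def pkey_def m'_def \<alpha>_def \<beta>_def
      by (auto simp: lookup_minus split: sum.split)
    then have "m' = m" using m m'P unfolding Mset_def by blast
    then have "\<alpha> - \<gamma> = \<alpha>" unfolding m'_def \<alpha>_def by (metis fst_conv)
    then have "Poly_Mapping.lookup (\<alpha> - \<gamma>) v = Poly_Mapping.lookup \<alpha> v" by simp
    then show False using nz by (simp add: lookup_minus lg min_def split: if_splits)
  qed
  have "pos_part (pdiff m) = \<alpha>"
  proof (rule poly_mapping_eqI)
    fix v show "Poly_Mapping.lookup (pos_part (pdiff m)) v = Poly_Mapping.lookup \<alpha> v"
      using zero[of v] unfolding lookup_pos pdiff_def \<alpha>_def[symmetric] \<beta>_def[symmetric] by auto
  qed
  moreover have "neg_part (pdiff m) = \<beta>"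
  proof (rule poly_mapping_eqI)
    fix v show "Poly_Mapping.lookup (neg_part (pdiff m)) v = Poly_Mapping.lookup \<beta> v"
      using zero[of v] unfolding lookup_neg pdiff_def \<alpha>_def[symmetric] \<beta>_def[symmetric] by auto
  qed
  ultimately show ?thesis unfolding binom_def \<alpha>_def \<beta>_def by simp
qed

lemma gen_pairs:
  fixes A :: "'v::finite \<Rightarrow> nat \<Rightarrow> int"
  shows "Adeg A \<alpha> = Adeg A \<beta> \<Longrightarrow>
    (Poly_Mapping.single \<alpha> 1 - Poly_Mapping.single \<beta> 1 :: ('v, 'k::field) mpoly)
      \<in> ideal_gen (binom ` pdiff ` Mset A)"
proof (induct "psize (\<alpha>, \<beta>)" arbitrary: \<alpha> \<beta> rule: less_induct)
  case less
  let ?G = "(binom ` pdiff ` Mset A) :: ('v, 'k) mpoly set"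
  show ?case
  proof (cases "\<alpha> = \<beta>")
    case True
    then show ?thesis by (simp add: ig_zero)
  next
    case False
    then have pP: "(\<alpha>, \<beta>) \<in> Pset A" using less.prems unfolding Pset_def by simp
    obtain m where m: "m \<in> Mset A" "le_pair m (\<alpha>, \<beta>)" using exists_min[OF pP] by blast
    have mP: "m \<in> Pset A" using m(1) unfolding Mset_def by blast
    define \<alpha>' where "\<alpha>' = fst m"
    define \<beta>' where "\<beta>' = snd m"
    have base: "(Poly_Mapping.single \<alpha>' 1 - Poly_Mapping.single \<beta>' 1 :: ('v, 'k) mpoly) \<in> ideal_gen ?G"
    proof -
      have "(binom (pdiff m) :: ('v, 'k) mpoly) \<in> ?G" using m(1) by blast
      then have h: "(binom (pdiff m) :: ('v, 'k) mpoly) \<in> ideal_gen ?G" by (rule ig_base)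
      have e: "(binom (pdiff m) :: ('v, 'k) mpoly) = Poly_Mapping.single (fst m) 1 - Poly_Mapping.single (snd m) 1"
        by (rule M_binom[OF m(1)])
      show ?thesis using h unfolding e \<alpha>'_def \<beta>'_def .
    qed
    show ?thesis
    proof (cases "m = (\<alpha>, \<beta>)")
      case True
      then show ?thesis using base unfolding \<alpha>'_def \<beta>'_def by simp
    next
      case mne: False
      have lea: "Poly_Mapping.lookup \<alpha>' v \<le> Poly_Mapping.lookup \<alpha> v" for v
        using m(2) unfolding le_pair_def pkey_def \<alpha>'_def by (metis fst_conv sum.simps(5))
      have leb: "Poly_Mapping.lookup \<beta>' v \<le> Poly_Mapping.lookup \<beta> v" for v
        using m(2) unfolding le_pair_def pkey_def \<beta>'_def by (metis snd_conv sum.simps(6))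
      define \<delta> where "\<delta> = \<alpha> - \<alpha>'"
      define \<epsilon> where "\<epsilon> = \<beta> - \<beta>'"
      have aeq: "\<alpha> = \<delta> + \<alpha>'"
        by (rule poly_mapping_eqI) (simp add: \<delta>_def lookup_add lookup_minus lea)
      have beq: "\<beta> = \<beta>' + \<epsilon>"
        by (rule poly_mapping_eqI) (simp add: \<epsilon>_def lookup_add lookup_minus leb)
      have pdd: "pdiff (\<delta>, \<epsilon>) = (\<lambda>v. pdiff (\<alpha>, \<beta>) v - pdiff m v)"
        unfolding pdiff_def \<delta>_def \<epsilon>_def \<alpha>'_def[symmetric] \<beta>'_def[symmetric]
        by (simp add: fun_eq_iff lookup_minus of_nat_diff lea leb)
      have "pdiff (\<delta>, \<epsilon>) \<in> kerZ A"
        unfolding pdd by (intro kerZ_diff pdiff_ker pP mP)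
      then have adeg: "Adeg A \<delta> = Adeg A \<epsilon>" using Adeg_eq_iff[of A \<delta> \<epsilon>] unfolding pdiff_def by simp
      have "psize (\<delta>, \<epsilon>) < psize (\<alpha>, \<beta>)"
      proof -
        have k: "pkey (\<delta>, \<epsilon>) x = pkey (\<alpha>, \<beta>) x - pkey m x" for x
          unfolding pkey_def \<delta>_def \<epsilon>_def \<alpha>'_def \<beta>'_def
          by (simp add: lookup_minus split: sum.split)
        obtain x where x: "pkey m x > 0"
        proof (rule ccontr)
          assume "\<not> thesis"
          then have z: "pkey m x = 0" for x using that by blast
          have "Poly_Mapping.lookup \<alpha>' v = Poly_Mapping.lookup \<beta>' v" for v
            using z[of "Inl v"] z[of "Inr v"] unfolding pkey_def \<alpha>'_def \<beta>'_def by simp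
          then have "\<alpha>' = \<beta>'" by (rule poly_mapping_eqI)
          then show False using mP unfolding Pset_def \<alpha>'_def \<beta>'_def by simp
        qed
        have "pkey m x \<le> pkey (\<alpha>, \<beta>) x" using m(2) unfolding le_pair_def by blast
        then have "pkey (\<delta>, \<epsilon>) x < pkey (\<alpha>, \<beta>) x" using k x by simp
        then show ?thesis unfolding psize_def using k
          by (intro sum_strict_mono_ex1) auto
      qed
      then have IH: "(Poly_Mapping.single \<delta> 1 - Poly_Mapping.single \<epsilon> 1 :: ('v, 'k) mpoly) \<in> ideal_gen ?G"
        using less.hyps adeg by blast
      have "(Poly_Mapping.single \<delta> 1 :: ('v, 'k) mpoly) * (Poly_Mapping.single \<alpha>' 1 - Poly_Mapping.single \<beta>' 1)
          + Poly_Mapping.single \<beta>' 1 * (Poly_Mapping.single \<delta> 1 - Poly_Mapping.single \<epsilon> 1)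
          = Poly_Mapping.single (\<delta> + \<alpha>') 1 - Poly_Mapping.single (\<beta>' + \<epsilon>) 1"
        by (simp add: right_diff_distrib mult_single add.commute)
      also have "\<dots> = Poly_Mapping.single \<alpha> 1 - Poly_Mapping.single \<beta> 1"
        using aeq beq by simp
      finally have eq: "(Poly_Mapping.single \<alpha> 1 - Poly_Mapping.single \<beta> 1 :: ('v, 'k) mpoly) =
          Poly_Mapping.single \<delta> 1 * (Poly_Mapping.single \<alpha>' 1 - Poly_Mapping.single \<beta>' 1)
          + Poly_Mapping.single \<beta>' 1 * (Poly_Mapping.single \<delta> 1 - Poly_Mapping.single \<epsilon> 1)" by simp
      show ?thesis unfolding eq by (intro ig_add ig_mult base IH)
    qed
  qed
qed

lemma FG:
  "\<exists>F. finite F \<and> F \<subseteq> kerZ A \<and>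
     (toric_ideal (A :: 'v::finite \<Rightarrow> nat \<Rightarrow> int) :: ('v, 'k::field) mpoly set) \<subseteq> ideal_gen (binom ` F)"
proof (intro exI conjI)
  show "finite (pdiff ` Mset A)" using finite_M[of A] by (rule finite_imageI)
  show "pdiff ` Mset A \<subseteq> kerZ A" using pdiff_ker unfolding Mset_def by blast
  have "(toric_ideal A :: ('v, 'k) mpoly set) \<subseteq> ideal_gen
     {Poly_Mapping.single \<alpha> 1 - Poly_Mapping.single \<beta> 1 | \<alpha> \<beta>. Adeg A \<alpha> = Adeg A \<beta>}"
    using toric_gen_diff by blast
  also have "\<dots> \<subseteq> ideal_gen (binom ` pdiff ` Mset A)"
    by (rule ig_subset) (auto intro: gen_pairs)
  finally show "(toric_ideal A :: ('v, 'k) mpoly set) \<subseteq> ideal_gen (binom ` pdiff ` Mset A)" .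
qed


lemma spanQ_sub:
  assumes "C \<subseteq> kerZ B"
  shows "spanQ C \<subseteq> kerQ (B :: 'v::finite \<Rightarrow> nat \<Rightarrow> int)"
proof
  fix x assume "x \<in> spanQ C"
  then obtain t r where t: "finite t" "t \<subseteq> C" "x = (\<lambda>v. \<Sum>u\<in>t. r u * rat_of_int (u v))"
    unfolding spanQ_def by blast
  have "(\<Sum>v\<in>UNIV. x v * of_int (B v i)) = 0" for i
  proof -
    have "(\<Sum>v\<in>UNIV. x v * of_int (B v i)) = (\<Sum>v\<in>UNIV. \<Sum>u\<in>t. r u * (rat_of_int (u v) * of_int (B v i)))"
      unfolding t(3) by (simp add: sum_distrib_right mult.assoc)
    also have "\<dots> = (\<Sum>u\<in>t. \<Sum>v\<in>UNIV. r u * (rat_of_int (u v) * of_int (B v i)))"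
      by (rule sum.swap)
    also have "\<dots> = (\<Sum>u\<in>t. r u * rat_of_int (\<Sum>v\<in>UNIV. u v * B v i))"
      by (simp add: sum_distrib_left)
    also have "\<dots> = 0"
    proof (rule sum.neutral, rule ballI)
      fix u assume "u \<in> t"
      then have "(\<Sum>v\<in>UNIV. u v * B v i) = 0" using t(2) assms unfolding kerZ_def by blast
      then show "r u * rat_of_int (\<Sum>v\<in>UNIV. u v * B v i) = 0" by simp
    qed
    finally show ?thesis .
  qed
  then show "x \<in> kerQ B" unfolding kerQ_def by simp
qed

lemma kerQ_int:
  assumes "(\<lambda>v. rat_of_int (u v)) \<in> kerQ B"
  shows "u \<in> kerZ B"
proof -
  have "rat_of_int (\<Sum>v\<in>UNIV. u v * B v i) = 0" for i
    using assms unfolding kerQ_def by simp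
  then have "(\<Sum>v\<in>UNIV. u v * B v i) = 0" for i by (metis of_int_eq_0_iff)
  then show ?thesis unfolding kerZ_def by simp
qed

lemma kerZ_kerQ:
  assumes "u \<in> kerZ B"
  shows "(\<lambda>v. rat_of_int (u v)) \<in> kerQ B"
proof -
  have "(\<Sum>v\<in>UNIV. u v * B v i) = 0" for i using assms unfolding kerZ_def by simp
  then have "rat_of_int (\<Sum>v\<in>UNIV. u v * B v i) = 0" for i by simp
  then show ?thesis unfolding kerQ_def by simp
qed

definition ext_conf :: "('v \<Rightarrow> nat \<Rightarrow> int) \<Rightarrow> nat \<Rightarrow> ('v \<Rightarrow> int) \<Rightarrow> 'v \<Rightarrow> nat \<Rightarrow> int" where
  "ext_conf A m \<psi> = (\<lambda>v k. if k = m then \<psi> v else A v k)"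

lemma kerZ_ext:
  assumes "config_in m A"
  shows "kerZ (ext_conf A m \<psi>) = {u \<in> kerZ A. (\<Sum>v\<in>UNIV. u v * \<psi> v) = 0}"
proof -
  have Am: "A v m = 0" for v using assms unfolding config_in_def by simp
  show ?thesis
  proof (intro set_eqI iffI)
    fix u assume u: "u \<in> kerZ (ext_conf A m \<psi>)"
    have uk: "(\<Sum>v\<in>UNIV. u v * ext_conf A m \<psi> v k) = 0" for k using u unfolding kerZ_def by blast
    have "(\<Sum>v\<in>UNIV. u v * A v k) = 0" for k
    proof (cases "k = m")
      case True then show ?thesis by (simp add: Am)
    next
      case False
      then have "ext_conf A m \<psi> v k = A v k" for v by (simp add: ext_conf_def)
      then show ?thesis using uk[of k] by simp
    qed
    moreover have "(\<Sum>v\<in>UNIV. u v * \<psi> v) = 0"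
    proof -
      have "ext_conf A m \<psi> v m = \<psi> v" for v by (simp add: ext_conf_def)
      then show ?thesis using uk[of m] by simp
    qed
    ultimately show "u \<in> {u \<in> kerZ A. (\<Sum>v\<in>UNIV. u v * \<psi> v) = 0}" unfolding kerZ_def by simp
  next
    fix u assume "u \<in> {u \<in> kerZ A. (\<Sum>v\<in>UNIV. u v * \<psi> v) = 0}"
    then have h: "\<forall>i. (\<Sum>v\<in>UNIV. u v * A v i) = 0" "(\<Sum>v\<in>UNIV. u v * \<psi> v) = 0"
      unfolding kerZ_def by auto
    have "(\<Sum>v\<in>UNIV. u v * ext_conf A m \<psi> v k) = 0" for k
      by (cases "k = m") (simp_all add: ext_conf_def h)
    then show "u \<in> kerZ (ext_conf A m \<psi>)" unfolding kerZ_def by simp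
  qed
qed


lemma assemble:
  fixes A :: "'v::finite \<Rightarrow> nat \<Rightarrow> int"
  assumes C: "C \<subseteq> (\<Union>i\<in>{1..s}. kerZ (AA i))"
    and H: "\<forall>i\<in>{1..s}. kerZ (AA i) \<subseteq> kerZ A \<and> (\<exists>u\<in>kerZ A. u \<notin> kerZ (AA i))"
  shows "C \<subseteq> kerZ A \<and> C = (\<Union>i\<in>{1..s}. C \<inter> kerZ (AA i)) \<and>
     (\<forall>i\<in>{1..s}. spanQ (C \<inter> kerZ (AA i)) \<subset> kerQ A)"
proof (intro conjI ballI)
  show "C \<subseteq> kerZ A" using C H by blast
  show "C = (\<Union>i\<in>{1..s}. C \<inter> kerZ (AA i))" using C by blast
  fix i assume i: "i \<in> {1..s}"
  have s1: "spanQ (C \<inter> kerZ (AA i)) \<subseteq> kerQ (AA i)" by (rule spanQ_sub) blast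
  have s2: "spanQ (C \<inter> kerZ (AA i)) \<subseteq> kerQ A" by (rule spanQ_sub) (use C H i in blast)
  obtain u where u: "u \<in> kerZ A" "u \<notin> kerZ (AA i)" using H i by blast
  have "(\<lambda>v. rat_of_int (u v)) \<in> kerQ A" using u(1) by (rule kerZ_kerQ)
  moreover have "(\<lambda>v. rat_of_int (u v)) \<notin> kerQ (AA i)" using u(2) kerQ_int by blast
  ultimately show "spanQ (C \<inter> kerZ (AA i)) \<subset> kerQ A" using s1 s2 by blast
qed

lemma fwd:
  fixes A :: "'v::finite \<Rightarrow> nat \<Rightarrow> int" and I :: "nat \<Rightarrow> ('v, 'k::field) mpoly set"
  assumes I1: "\<forall>i\<in>{1..s}. is_toric_ideal (I i) \<and> I i \<noteq> toric_ideal A"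
    and I2: "\<forall>i\<in>{1..s}. I i \<subseteq> toric_ideal A"
  shows "\<exists>FF AA. finite FF \<and> ideal_gen ((binom :: _ \<Rightarrow> ('v, 'k) mpoly) ` FF) = ideal_gen (\<Union>i\<in>{1..s}. I i) \<and>
     FF \<subseteq> (\<Union>i\<in>{1..s}. kerZ (AA i)) \<and>
     (\<forall>i\<in>{1..s}. kerZ (AA i) \<subseteq> kerZ A \<and> (\<exists>u\<in>kerZ A. u \<notin> kerZ (AA i)))"
proof -
  have "\<forall>i\<in>{1..s}. \<exists>B. I i = toric_ideal (B :: 'v \<Rightarrow> nat \<Rightarrow> int)"
    using I1 unfolding is_toric_ideal_def by blast
  then obtain AA where AA: "\<forall>i\<in>{1..s}. I i = toric_ideal (AA i :: 'v \<Rightarrow> nat \<Rightarrow> int)"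
    by (rule bchoice[elim_format]) blast
  have "\<forall>i\<in>{1..s}. \<exists>F. finite F \<and> F \<subseteq> kerZ (AA i) \<and>
      (toric_ideal (AA i) :: ('v, 'k) mpoly set) \<subseteq> ideal_gen (binom ` F)"
    using FG by blast
  then obtain FFi where FFi: "\<forall>i\<in>{1..s}. finite (FFi i) \<and> FFi i \<subseteq> kerZ (AA i) \<and>
      (toric_ideal (AA i) :: ('v, 'k) mpoly set) \<subseteq> ideal_gen (binom ` FFi i)"
    by (rule bchoice[elim_format]) blast
  define FF where "FF = (\<Union>i\<in>{1..s}. FFi i)"
  have finFF: "finite FF" unfolding FF_def using FFi by auto
  have kk: "kerZ (AA i) \<subseteq> kerZ A \<and> (\<exists>u\<in>kerZ A. u \<notin> kerZ (AA i))" if i: "i \<in> {1..s}" for i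
  proof
    show sub: "kerZ (AA i) \<subseteq> kerZ A"
    proof
      fix u assume "u \<in> kerZ (AA i)"
      then have "(binom u :: ('v, 'k) mpoly) \<in> toric_ideal (AA i)" using binom_toric by blast
      then have "(binom u :: ('v, 'k) mpoly) \<in> toric_ideal A" using AA I2 i by blast
      then show "u \<in> kerZ A" using binom_toric by blast
    qed
    show "\<exists>u\<in>kerZ A. u \<notin> kerZ (AA i)"
    proof (rule ccontr)
      assume "\<not> (\<exists>u\<in>kerZ A. u \<notin> kerZ (AA i))"
      then have "kerZ A \<subseteq> kerZ (AA i)" by blast
      then have "(toric_ideal A :: ('v, 'k) mpoly set) \<subseteq> toric_ideal (AA i)" by (rule toric_mono)
      then have "I i = toric_ideal A" using AA I2 i by blast
      then show False using I1 i by blast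
    qed
  qed
  have "ideal_gen ((binom :: _ \<Rightarrow> ('v, 'k) mpoly) ` FF) = ideal_gen (\<Union>i\<in>{1..s}. I i)"
  proof
    show "ideal_gen ((binom :: _ \<Rightarrow> ('v, 'k) mpoly) ` FF) \<subseteq> ideal_gen (\<Union>i\<in>{1..s}. I i)"
    proof (rule ig_mono, rule subsetI)
      fix x assume "x \<in> (binom :: _ \<Rightarrow> ('v, 'k) mpoly) ` FF"
      then obtain i u where iu: "i \<in> {1..s}" "u \<in> FFi i" "x = binom u" unfolding FF_def by blast
      then have "u \<in> kerZ (AA i)" using FFi by blast
      then have "x \<in> toric_ideal (AA i)" using iu(3) binom_toric by blast
      then show "x \<in> (\<Union>i\<in>{1..s}. I i)" using AA iu(1) by blast
    qed
    show "ideal_gen (\<Union>i\<in>{1..s}. I i) \<subseteq> ideal_gen ((binom :: _ \<Rightarrow> ('v, 'k) mpoly) ` FF)"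
    proof (rule ig_subset, rule subsetI)
      fix x assume "x \<in> (\<Union>i\<in>{1..s}. I i)"
      then obtain i where i: "i \<in> {1..s}" "x \<in> I i" by blast
      then have "x \<in> ideal_gen (binom ` FFi i)" using AA FFi by blast
      moreover have "ideal_gen ((binom :: _ \<Rightarrow> ('v, 'k) mpoly) ` FFi i) \<subseteq> ideal_gen (binom ` FF)"
      proof (rule ig_mono, rule image_mono)
        show "FFi i \<subseteq> FF" unfolding FF_def using i(1) by blast
      qed
      ultimately show "x \<in> ideal_gen ((binom :: _ \<Rightarrow> ('v, 'k) mpoly) ` FF)" by blast
    qed
  qed
  moreover have "FF \<subseteq> (\<Union>i\<in>{1..s}. kerZ (AA i))" unfolding FF_def using FFi by blast
  ultimately show ?thesis using finFF kk by blast
qed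

lemma bwd:
  fixes A :: "'v::finite \<Rightarrow> nat \<Rightarrow> int"
  assumes cfg: "config_in m A" and pt: "pointed A" and CK: "C \<subseteq> kerZ A"
    and CU: "C = (\<Union>i\<in>{1..s}. Cs i)" and sp: "\<forall>i\<in>{1..s}. spanQ (Cs i) \<subset> kerQ A"
  shows "\<exists>I :: nat \<Rightarrow> ('v, 'k::field) mpoly set.
     (\<forall>i\<in>{1..s}. is_toric_ideal (I i) \<and> I i \<noteq> toric_ideal A) \<and>
     (\<forall>i\<in>{1..s}. I i \<subseteq> toric_ideal A) \<and> (binom :: _ \<Rightarrow> ('v, 'k) mpoly) ` C \<subseteq> (\<Union>i\<in>{1..s}. I i)"
proof -
  have "\<forall>i\<in>{1..s}. \<exists>\<psi>::'v\<Rightarrow>int. (\<forall>u\<in>Cs i. (\<Sum>v\<in>UNIV. u v * \<psi> v) = 0) \<and>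
            (\<exists>u\<in>kerZ A. (\<Sum>v\<in>UNIV. u v * \<psi> v) \<noteq> 0)"
    using sp sep by blast
  then obtain \<psi> where \<psi>: "\<forall>i\<in>{1..s}. (\<forall>u\<in>Cs i. (\<Sum>v\<in>UNIV. u v * \<psi> i v) = 0) \<and>
            (\<exists>u\<in>kerZ A. (\<Sum>v\<in>UNIV. u v * \<psi> i v) \<noteq> 0)"
    by (rule bchoice[elim_format]) blast
  define I where "I i = (toric_ideal (ext_conf A m (\<psi> i)) :: ('v, 'k) mpoly set)" for i
  have kE: "kerZ (ext_conf A m (\<psi> i)) = {u \<in> kerZ A. (\<Sum>v\<in>UNIV. u v * \<psi> i v) = 0}" for i
    by (rule kerZ_ext[OF cfg])
  have sub: "kerZ (ext_conf A m (\<psi> i)) \<subseteq> kerZ A" for i using kE by blast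
  have P1: "is_toric_ideal (I i) \<and> I i \<noteq> toric_ideal A" if i: "i \<in> {1..s}" for i
  proof
    have "config_in (Suc m) (ext_conf A m (\<psi> i))"
      using cfg unfolding config_in_def ext_conf_def by simp
    moreover have "pointed (ext_conf A m (\<psi> i))"
      using pt sub[of i] unfolding pointed_def by blast
    ultimately show "is_toric_ideal (I i)" unfolding is_toric_ideal_def I_def by blast
    obtain u where u: "u \<in> kerZ A" "(\<Sum>v\<in>UNIV. u v * \<psi> i v) \<noteq> 0" using \<psi> i by blast
    have "(binom u :: ('v, 'k) mpoly) \<in> toric_ideal A" using u(1) binom_toric by blast
    moreover have "(binom u :: ('v, 'k) mpoly) \<notin> I i"
      unfolding I_def binom_toric kE using u(2) by blast
    ultimately show "I i \<noteq> toric_ideal A" by blast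
  qed
  have P2: "I i \<subseteq> toric_ideal A" for i unfolding I_def by (rule toric_mono[OF sub])
  have P3: "(binom :: _ \<Rightarrow> ('v, 'k) mpoly) ` C \<subseteq> (\<Union>i\<in>{1..s}. I i)"
  proof
    fix x assume "x \<in> (binom :: _ \<Rightarrow> ('v, 'k) mpoly) ` C"
    then obtain u where u: "u \<in> C" "x = binom u" by blast
    then obtain i where i: "i \<in> {1..s}" "u \<in> Cs i" using CU by blast
    have "u \<in> kerZ (ext_conf A m (\<psi> i))" unfolding kE using u(1) CK \<psi> i by blast
    then have "x \<in> I i" unfolding I_def u(2) using binom_toric by blast
    then show "x \<in> (\<Union>i\<in>{1..s}. I i)" using i by blast
  qed
  show ?thesis using P1 P2 P3 by blast
qed


theorem theorem2p1:
  fixes A :: "'v::finite \<Rightarrow> nat \<Rightarrow> int" and m s :: nat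
  assumes "config_in m A" and "pointed A" and "1 \<le> s"
  shows
   "((\<exists>I :: nat \<Rightarrow> ('v, 'k::field) mpoly set.
        (\<forall>i\<in>{1..s}. is_toric_ideal (I i) \<and> I i \<noteq> toric_ideal A) \<and>
        toric_ideal A = ideal_gen (\<Union>i\<in>{1..s}. I i))
     \<longleftrightarrow>
     (\<exists>C Cs. C \<subseteq> kerZ A \<and> min_binom_gens A ((binom :: _ \<Rightarrow> ('v, 'k) mpoly) ` C) \<and>
        C = (\<Union>i\<in>{1..s}. Cs i) \<and> (\<forall>i\<in>{1..s}. spanQ (Cs i) \<subset> kerQ A)))
    \<and>
    ((\<exists>I :: nat \<Rightarrow> ('v, 'k) mpoly set.
        (\<forall>i\<in>{1..s}. is_toric_ideal (I i) \<and> I i \<noteq> toric_ideal A) \<and>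
        toric_ideal A = radical (ideal_gen (\<Union>i\<in>{1..s}. I i)))
     \<longleftrightarrow>
     (\<exists>C Cs. C \<subseteq> kerZ A \<and> min_binom_gens_rad A ((binom :: _ \<Rightarrow> ('v, 'k) mpoly) ` C) \<and>
        C = (\<Union>i\<in>{1..s}. Cs i) \<and> (\<forall>i\<in>{1..s}. spanQ (Cs i) \<subset> kerQ A)))"
proof -
  let ?T = "toric_ideal A :: ('v, 'k) mpoly set"
  have part1: "(\<exists>I :: nat \<Rightarrow> ('v, 'k) mpoly set.
        (\<forall>i\<in>{1..s}. is_toric_ideal (I i) \<and> I i \<noteq> toric_ideal A) \<and>
        toric_ideal A = ideal_gen (\<Union>i\<in>{1..s}. I i))
     \<longleftrightarrow>
     (\<exists>C Cs. C \<subseteq> kerZ A \<and> min_binom_gens A ((binom :: _ \<Rightarrow> ('v, 'k) mpoly) ` C) \<and>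
        C = (\<Union>i\<in>{1..s}. Cs i) \<and> (\<forall>i\<in>{1..s}. spanQ (Cs i) \<subset> kerQ A))"
  proof
    assume "\<exists>I :: nat \<Rightarrow> ('v, 'k) mpoly set.
        (\<forall>i\<in>{1..s}. is_toric_ideal (I i) \<and> I i \<noteq> toric_ideal A) \<and>
        toric_ideal A = ideal_gen (\<Union>i\<in>{1..s}. I i)"
    then obtain I :: "nat \<Rightarrow> ('v, 'k) mpoly set" where
      I1: "\<forall>i\<in>{1..s}. is_toric_ideal (I i) \<and> I i \<noteq> toric_ideal A" and
      I3: "?T = ideal_gen (\<Union>i\<in>{1..s}. I i)" by blast
    have I2: "\<forall>i\<in>{1..s}. I i \<subseteq> ?T" unfolding I3 by (auto intro: ig_base)
    obtain FF AA where FF: "finite FF"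
      "ideal_gen ((binom :: _ \<Rightarrow> ('v, 'k) mpoly) ` FF) = ideal_gen (\<Union>i\<in>{1..s}. I i)"
      "FF \<subseteq> (\<Union>i\<in>{1..s}. kerZ (AA i))"
      "\<forall>i\<in>{1..s}. kerZ (AA i) \<subseteq> kerZ A \<and> (\<exists>u\<in>kerZ A. u \<notin> kerZ (AA i))"
      using fwd[OF I1 I2] by blast
    have G: "ideal_gen ((binom :: _ \<Rightarrow> ('v, 'k) mpoly) ` FF) = ?T" using FF(2) I3 by simp
    obtain S where S: "S \<subseteq> (binom :: _ \<Rightarrow> ('v, 'k) mpoly) ` FF" "ideal_gen S = ?T"
      "\<forall>S'. S' \<subset> S \<longrightarrow> ideal_gen S' \<noteq> ?T"
      using min_subset[of "(binom :: _ \<Rightarrow> ('v, 'k) mpoly) ` FF" "\<lambda>S. ideal_gen S = ?T"] FF(1) G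
      by blast
    obtain C where C: "C \<subseteq> FF" "S = binom ` C" using S(1) subset_image_iff by metis
    have "min_binom_gens A ((binom :: _ \<Rightarrow> ('v, 'k) mpoly) ` C)"
      unfolding min_binom_gens_def using S C(2) by simp
    moreover have "C \<subseteq> kerZ A \<and> C = (\<Union>i\<in>{1..s}. C \<inter> kerZ (AA i)) \<and>
      (\<forall>i\<in>{1..s}. spanQ (C \<inter> kerZ (AA i)) \<subset> kerQ A)"
      using assemble[where C=C and s=s and AA=AA and A=A] C(1) FF(3) FF(4) by blast
    ultimately show "\<exists>C Cs. C \<subseteq> kerZ A \<and> min_binom_gens A ((binom :: _ \<Rightarrow> ('v, 'k) mpoly) ` C) \<and>
        C = (\<Union>i\<in>{1..s}. Cs i) \<and> (\<forall>i\<in>{1..s}. spanQ (Cs i) \<subset> kerQ A)" by blast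
  next
    assume "\<exists>C Cs. C \<subseteq> kerZ A \<and> min_binom_gens A ((binom :: _ \<Rightarrow> ('v, 'k) mpoly) ` C) \<and>
        C = (\<Union>i\<in>{1..s}. Cs i) \<and> (\<forall>i\<in>{1..s}. spanQ (Cs i) \<subset> kerQ A)"
    then obtain C Cs where C: "C \<subseteq> kerZ A" "min_binom_gens A ((binom :: _ \<Rightarrow> ('v, 'k) mpoly) ` C)"
        "C = (\<Union>i\<in>{1..s}. Cs i)" "\<forall>i\<in>{1..s}. spanQ (Cs i) \<subset> kerQ A" by blast
    obtain I :: "nat \<Rightarrow> ('v, 'k) mpoly set" where I:
      "\<forall>i\<in>{1..s}. is_toric_ideal (I i) \<and> I i \<noteq> toric_ideal A"
      "\<forall>i\<in>{1..s}. I i \<subseteq> toric_ideal A" "(binom :: _ \<Rightarrow> ('v, 'k) mpoly) ` C \<subseteq> (\<Union>i\<in>{1..s}. I i)"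
      using bwd[OF assms(1) assms(2) C(1) C(3) C(4)] by blast
    have T: "?T = ideal_gen ((binom :: _ \<Rightarrow> ('v, 'k) mpoly) ` C)" using C(2) unfolding min_binom_gens_def by simp
    have "?T = ideal_gen (\<Union>i\<in>{1..s}. I i)"
    proof
      show "?T \<subseteq> ideal_gen (\<Union>i\<in>{1..s}. I i)" unfolding T by (rule ig_mono[OF I(3)])
      show "ideal_gen (\<Union>i\<in>{1..s}. I i) \<subseteq> ?T" unfolding T
        by (rule ig_subset) (use I(2) T in blast)
    qed
    then show "\<exists>I :: nat \<Rightarrow> ('v, 'k) mpoly set.
        (\<forall>i\<in>{1..s}. is_toric_ideal (I i) \<and> I i \<noteq> toric_ideal A) \<and>
        toric_ideal A = ideal_gen (\<Union>i\<in>{1..s}. I i)" using I(1) by blast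
  qed
  have part2: "(\<exists>I :: nat \<Rightarrow> ('v, 'k) mpoly set.
        (\<forall>i\<in>{1..s}. is_toric_ideal (I i) \<and> I i \<noteq> toric_ideal A) \<and>
        toric_ideal A = radical (ideal_gen (\<Union>i\<in>{1..s}. I i)))
     \<longleftrightarrow>
     (\<exists>C Cs. C \<subseteq> kerZ A \<and> min_binom_gens_rad A ((binom :: _ \<Rightarrow> ('v, 'k) mpoly) ` C) \<and>
        C = (\<Union>i\<in>{1..s}. Cs i) \<and> (\<forall>i\<in>{1..s}. spanQ (Cs i) \<subset> kerQ A))"
  proof
    assume "\<exists>I :: nat \<Rightarrow> ('v, 'k) mpoly set.
        (\<forall>i\<in>{1..s}. is_toric_ideal (I i) \<and> I i \<noteq> toric_ideal A) \<and>
        toric_ideal A = radical (ideal_gen (\<Union>i\<in>{1..s}. I i))"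
    then obtain I :: "nat \<Rightarrow> ('v, 'k) mpoly set" where
      I1: "\<forall>i\<in>{1..s}. is_toric_ideal (I i) \<and> I i \<noteq> toric_ideal A" and
      I3: "?T = radical (ideal_gen (\<Union>i\<in>{1..s}. I i))" by blast
    have I2: "\<forall>i\<in>{1..s}. I i \<subseteq> ?T"
    proof
      fix i assume i: "i \<in> {1..s}"
      have "I i \<subseteq> ideal_gen (\<Union>i\<in>{1..s}. I i)"
      proof
        fix x assume "x \<in> I i"
        then have "x \<in> (\<Union>i\<in>{1..s}. I i)" using i by blast
        then show "x \<in> ideal_gen (\<Union>i\<in>{1..s}. I i)" by (rule ig_base)
      qed
      also have "\<dots> \<subseteq> ?T" unfolding I3 by (rule rad_sup)
      finally show "I i \<subseteq> ?T" .
    qed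
    obtain FF AA where FF: "finite FF"
      "ideal_gen ((binom :: _ \<Rightarrow> ('v, 'k) mpoly) ` FF) = ideal_gen (\<Union>i\<in>{1..s}. I i)"
      "FF \<subseteq> (\<Union>i\<in>{1..s}. kerZ (AA i))"
      "\<forall>i\<in>{1..s}. kerZ (AA i) \<subseteq> kerZ A \<and> (\<exists>u\<in>kerZ A. u \<notin> kerZ (AA i))"
      using fwd[OF I1 I2] by blast
    have G: "radical (ideal_gen ((binom :: _ \<Rightarrow> ('v, 'k) mpoly) ` FF)) = ?T" using FF(2) I3 by simp
    obtain S where S: "S \<subseteq> (binom :: _ \<Rightarrow> ('v, 'k) mpoly) ` FF" "radical (ideal_gen S) = ?T"
      "\<forall>S'. S' \<subset> S \<longrightarrow> radical (ideal_gen S') \<noteq> ?T"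
      using min_subset[of "(binom :: _ \<Rightarrow> ('v, 'k) mpoly) ` FF" "\<lambda>S. radical (ideal_gen S) = ?T"] FF(1) G
      by blast
    obtain C where C: "C \<subseteq> FF" "S = binom ` C" using S(1) subset_image_iff by metis
    have "min_binom_gens_rad A ((binom :: _ \<Rightarrow> ('v, 'k) mpoly) ` C)"
      unfolding min_binom_gens_rad_def using S C(2) by simp
    moreover have "C \<subseteq> kerZ A \<and> C = (\<Union>i\<in>{1..s}. C \<inter> kerZ (AA i)) \<and>
      (\<forall>i\<in>{1..s}. spanQ (C \<inter> kerZ (AA i)) \<subset> kerQ A)"
      using assemble[where C=C and s=s and AA=AA and A=A] C(1) FF(3) FF(4) by blast
    ultimately show "\<exists>C Cs. C \<subseteq> kerZ A \<and> min_binom_gens_rad A ((binom :: _ \<Rightarrow> ('v, 'k) mpoly) ` C) \<and>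
        C = (\<Union>i\<in>{1..s}. Cs i) \<and> (\<forall>i\<in>{1..s}. spanQ (Cs i) \<subset> kerQ A)" by blast
  next
    assume "\<exists>C Cs. C \<subseteq> kerZ A \<and> min_binom_gens_rad A ((binom :: _ \<Rightarrow> ('v, 'k) mpoly) ` C) \<and>
        C = (\<Union>i\<in>{1..s}. Cs i) \<and> (\<forall>i\<in>{1..s}. spanQ (Cs i) \<subset> kerQ A)"
    then obtain C Cs where C: "C \<subseteq> kerZ A" "min_binom_gens_rad A ((binom :: _ \<Rightarrow> ('v, 'k) mpoly) ` C)"
        "C = (\<Union>i\<in>{1..s}. Cs i)" "\<forall>i\<in>{1..s}. spanQ (Cs i) \<subset> kerQ A" by blast
    obtain I :: "nat \<Rightarrow> ('v, 'k) mpoly set" where I: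
      "\<forall>i\<in>{1..s}. is_toric_ideal (I i) \<and> I i \<noteq> toric_ideal A"
      "\<forall>i\<in>{1..s}. I i \<subseteq> toric_ideal A" "(binom :: _ \<Rightarrow> ('v, 'k) mpoly) ` C \<subseteq> (\<Union>i\<in>{1..s}. I i)"
      using bwd[OF assms(1) assms(2) C(1) C(3) C(4)] by blast
    have T: "?T = radical (ideal_gen ((binom :: _ \<Rightarrow> ('v, 'k) mpoly) ` C))"
      using C(2) unfolding min_binom_gens_rad_def by simp
    have "?T = radical (ideal_gen (\<Union>i\<in>{1..s}. I i))"
    proof
      show "?T \<subseteq> radical (ideal_gen (\<Union>i\<in>{1..s}. I i))" unfolding T
        by (rule rad_mono[OF ig_mono[OF I(3)]])
      have "ideal_gen (\<Union>i\<in>{1..s}. I i) \<subseteq> ideal_gen ?T" by (rule ig_mono) (use I(2) in blast)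
      also have "\<dots> \<subseteq> ?T" unfolding T by (rule rad_ideal)
      finally have "radical (ideal_gen (\<Union>i\<in>{1..s}. I i)) \<subseteq> radical ?T" by (rule rad_mono)
      also have "\<dots> \<subseteq> ?T" unfolding T by (rule rad_rad)
      finally show "radical (ideal_gen (\<Union>i\<in>{1..s}. I i)) \<subseteq> ?T" .
    qed
    then show "\<exists>I :: nat \<Rightarrow> ('v, 'k) mpoly set.
        (\<forall>i\<in>{1..s}. is_toric_ideal (I i) \<and> I i \<noteq> toric_ideal A) \<and>
        toric_ideal A = radical (ideal_gen (\<Union>i\<in>{1..s}. I i))" using I(1) by blast
  qed
  show ?thesis using part1 part2 by blast
qed

end
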